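(* Let $Z$ be a strongly facially symmetric space with dual $U=Z^*$. Let $\{v_i\}_{i\ge1}$ be a countable family of mutually orthogonal minimal geometric tripotents and let $v=\sup_i v_i$ be its supremum with respect to the order $\le$ on geometric tripotents (this supremum exists). Then $v=\sum_i v_i$, the series converging in the weak$^*$ topology of $U$.
   Context: Let $Z$ be a complex normed space with dual $U=Z^*$ and closed unit ball $Z_1$. Elements $f,g\in Z$ are orthogonal if $\|f+g\|=\|f-g\|=\|f\|+\|g\|$; $S^\perp$ is the set of elements orthogonal to all elements of $S$. A norm exposed face is a nonempty set $F_x=\{f\in Z_1:f(x)=1\}$, $x\in U$, $\|x\|=1$. A projective unit is $u\in U$, $\|u\|=1$, with $\langle u,F_u^\perp\rangle=0$. A norm exposed face $F$ is symmetric if there is a surjective linear isometry $S_F$ of $Z$, $S_F^2=I$, with fixed point set $\overline{\mathrm{sp}}\,F\oplus F^\perp$. $Z$ is weakly facially symmetric (WFS) if all norm exposed faces are symmetric. For symmetric $F$: $P_1(F)=(I-S_F)/2$, and $P_2(F),P_0(F)$ are the projections onto $\overline{\mathrm{sp}}\,F$ and $F^\perp$ with $P_2(F)+P_0(F)=(I+S_F)/2$. A geometric tripotent is a projective unit $u$ with $F_u$ symmetric and $S_{F_u}^*u=u$ for some symmetry; $P_k(u)=P_k(F_u)$, $U_k(u)=P_k(u)^*U$. Geometric tripotents $u,v$ are orthogonal if $u\in U_0(v)$; $u\le v$ means $F_u\subset F_v$; $v$ is minimal if $U_2(v)$ is one-dimensional. A WFS space is strongly facially symmetric if for every norm exposed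 face $F$ and every $y\in U$ with $\|y\|=1$ and $F\subset F_y$, one has $S_F^*y=y$. *)

theory Defs
  imports "HOL-Analysis.Analysis"
begin

text \<open>A complex normed space is modelled as a real normed vector space of type 'z
together with a complex scalar multiplication sm extending the real one and
satisfying the vector space axioms and absolute homogeneity of the norm.\<close>

definition complex_normed_space :: "(complex \<Rightarrow> 'z::real_normed_vector \<Rightarrow> 'z) \<Rightarrow> bool" where
  "complex_normed_space sm \<longleftrightarrow>
     (\<forall>r z. sm (complex_of_real r) z = r *\<^sub>R z) \<and>
     (\<forall>a b z. sm (a * b) z = sm a (sm b z)) \<and>
     (\<forall>a z w. sm a (z + w) = sm a z + sm a w) \<and>
     (\<forall>a b z. sm (a + b) z = sm a z + sm b z) \<and>
     (\<forall>a z. norm (sm a z) = cmod a * norm z)"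

definition dual :: "(complex \<Rightarrow> 'z::real_normed_vector \<Rightarrow> 'z) \<Rightarrow> ('z \<Rightarrow> complex) set" where
  "dual sm = {f. (\<forall>z w. f (z + w) = f z + f w) \<and> (\<forall>c z. f (sm c z) = c * f z) \<and>
                 (\<exists>K. \<forall>z. cmod (f z) \<le> K * norm z)}"

definition orth :: "'z::real_normed_vector \<Rightarrow> 'z \<Rightarrow> bool" where
  "orth f g \<longleftrightarrow> norm (f + g) = norm f + norm g \<and> norm (f - g) = norm f + norm g"

definition perp :: "'z::real_normed_vector set \<Rightarrow> 'z set" where
  "perp S = {g. \<forall>f\<in>S. orth f g}"

definition face :: "('z::real_normed_vector \<Rightarrow> complex) \<Rightarrow> 'z set" where
  "face x = {f. norm f \<le> 1 \<and> x f = 1}"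

definition norm_exposed_face :: "(complex \<Rightarrow> 'z::real_normed_vector \<Rightarrow> 'z) \<Rightarrow> 'z set \<Rightarrow> bool" where
  "norm_exposed_face sm F \<longleftrightarrow> (\<exists>x\<in>dual sm. onorm x = 1 \<and> F = face x \<and> F \<noteq> {})"

definition projective_unit :: "(complex \<Rightarrow> 'z::real_normed_vector \<Rightarrow> 'z) \<Rightarrow> ('z \<Rightarrow> complex) \<Rightarrow> bool" where
  "projective_unit sm u \<longleftrightarrow> u \<in> dual sm \<and> onorm u = 1 \<and> (\<forall>g\<in>perp (face u). u g = 0)"

definition cspan :: "(complex \<Rightarrow> 'z::real_normed_vector \<Rightarrow> 'z) \<Rightarrow> 'z set \<Rightarrow> 'z set" where
  "cspan sm F = {z. \<exists>A c. finite A \<and> A \<subseteq> F \<and> z = (\<Sum>a\<in>A. sm (c a) a)}"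

definition clsp :: "(complex \<Rightarrow> 'z::real_normed_vector \<Rightarrow> 'z) \<Rightarrow> 'z set \<Rightarrow> 'z set" where
  "clsp sm F = closure (cspan sm F)"

definition is_symmetry :: "(complex \<Rightarrow> 'z::real_normed_vector \<Rightarrow> 'z) \<Rightarrow> 'z set \<Rightarrow> ('z \<Rightarrow> 'z) \<Rightarrow> bool" where
  "is_symmetry sm F S \<longleftrightarrow>
     (\<forall>z w. S (z + w) = S z + S w) \<and> (\<forall>c z. S (sm c z) = sm c (S z)) \<and>
     (\<forall>z. norm (S z) = norm z) \<and> surj S \<and> (\<forall>z. S (S z) = z) \<and>
     {z. S z = z} = {a + b | a b. a \<in> clsp sm F \<and> b \<in> perp F} \<and>
     clsp sm F \<inter> perp F = {0}"

definition symmetric_face :: "(complex \<Rightarrow> 'z::real_normed_vector \<Rightarrow> 'z) \<Rightarrow> 'z set \<Rightarrow> bool" where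
  "symmetric_face sm F \<longleftrightarrow> norm_exposed_face sm F \<and> (\<exists>S. is_symmetry sm F S)"

definition WFS :: "(complex \<Rightarrow> 'z::real_normed_vector \<Rightarrow> 'z) \<Rightarrow> bool" where
  "WFS sm \<longleftrightarrow> (\<forall>F. norm_exposed_face sm F \<longrightarrow> symmetric_face sm F)"

text \<open>Strongly facially symmetric; the dual map S* y is y o S.\<close>
definition SFS :: "(complex \<Rightarrow> 'z::real_normed_vector \<Rightarrow> 'z) \<Rightarrow> bool" where
  "SFS sm \<longleftrightarrow> WFS sm \<and>
     (\<forall>F S y. norm_exposed_face sm F \<and> is_symmetry sm F S \<and> y \<in> dual sm \<and> onorm y = 1 \<and>
              F \<subseteq> face y \<longrightarrow> y \<circ> S = y)"

definition geometric_tripotent :: "(complex \<Rightarrow> 'z::real_normed_vector \<Rightarrow> 'z) \<Rightarrow> ('z \<Rightarrow> complex) \<Rightarrow> bool" where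
  "geometric_tripotent sm u \<longleftrightarrow> projective_unit sm u \<and> symmetric_face sm (face u) \<and>
     (\<exists>S. is_symmetry sm (face u) S \<and> u \<circ> S = u)"

definition gt_sym :: "(complex \<Rightarrow> 'z::real_normed_vector \<Rightarrow> 'z) \<Rightarrow> ('z \<Rightarrow> complex) \<Rightarrow> 'z \<Rightarrow> 'z" where
  "gt_sym sm u = (SOME S. is_symmetry sm (face u) S \<and> u \<circ> S = u)"

text \<open>P_2(u): projection onto clsp F_u with P_2 + P_0 = (I + S)/2, P_0 onto F_u-perp.\<close>
definition P2 :: "(complex \<Rightarrow> 'z::real_normed_vector \<Rightarrow> 'z) \<Rightarrow> ('z \<Rightarrow> complex) \<Rightarrow> 'z \<Rightarrow> 'z" where
  "P2 sm u z = (THE a. a \<in> clsp sm (face u) \<and>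
                   (1/2) *\<^sub>R (z + gt_sym sm u z) - a \<in> perp (face u))"

definition P0 :: "(complex \<Rightarrow> 'z::real_normed_vector \<Rightarrow> 'z) \<Rightarrow> ('z \<Rightarrow> complex) \<Rightarrow> 'z \<Rightarrow> 'z" where
  "P0 sm u z = (1/2) *\<^sub>R (z + gt_sym sm u z) - P2 sm u z"

definition U0 :: "(complex \<Rightarrow> 'z::real_normed_vector \<Rightarrow> 'z) \<Rightarrow> ('z \<Rightarrow> complex) \<Rightarrow> ('z \<Rightarrow> complex) set" where
  "U0 sm u = {x \<circ> P0 sm u | x. x \<in> dual sm}"

definition U2 :: "(complex \<Rightarrow> 'z::real_normed_vector \<Rightarrow> 'z) \<Rightarrow> ('z \<Rightarrow> complex) \<Rightarrow> ('z \<Rightarrow> complex) set" where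
  "U2 sm u = {x \<circ> P2 sm u | x. x \<in> dual sm}"

definition gt_orth :: "(complex \<Rightarrow> 'z::real_normed_vector \<Rightarrow> 'z) \<Rightarrow> ('z \<Rightarrow> complex) \<Rightarrow> ('z \<Rightarrow> complex) \<Rightarrow> bool" where
  "gt_orth sm u v \<longleftrightarrow> u \<in> U0 sm v"

definition gt_le :: "('z::real_normed_vector \<Rightarrow> complex) \<Rightarrow> ('z \<Rightarrow> complex) \<Rightarrow> bool" where
  "gt_le u v \<longleftrightarrow> face u \<subseteq> face v"

definition gt_minimal :: "(complex \<Rightarrow> 'z::real_normed_vector \<Rightarrow> 'z) \<Rightarrow> ('z \<Rightarrow> complex) \<Rightarrow> bool" where
  "gt_minimal sm v \<longleftrightarrow> (\<exists>w. w \<noteq> (\<lambda>_. 0) \<and> U2 sm v = {(\<lambda>z. c * w z) | c. True})"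

end

theory Submission
  imports Defs
begin


section \<open>Real Hahn-Banach\<close>

definition hb_good :: "('a::real_normed_vector \<times> real) set \<Rightarrow> bool" where
  "hb_good G \<longleftrightarrow> (\<forall>x r s. (x,r)\<in>G \<longrightarrow> (x,s)\<in>G \<longrightarrow> r = s) \<and>
     (\<forall>x r y s. (x,r)\<in>G \<longrightarrow> (y,s)\<in>G \<longrightarrow> (x+y, r+s)\<in>G) \<and>
     (\<forall>x r c. (x,r)\<in>G \<longrightarrow> (c *\<^sub>R x, c*r)\<in>G) \<and>
     (\<forall>x r. (x,r)\<in>G \<longrightarrow> r \<le> norm x)"

lemma hb_goodD:
  assumes "hb_good G"
  shows "\<And>x r s. (x,r)\<in>G \<Longrightarrow> (x,s)\<in>G \<Longrightarrow> r = s"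
   and "\<And>x r z s. (x,r)\<in>G \<Longrightarrow> (z,s)\<in>G \<Longrightarrow> (x+z, r+s)\<in>G"
   and "\<And>x r c. (x,r)\<in>G \<Longrightarrow> (c *\<^sub>R x, c*r)\<in>G"
   and "\<And>x r. (x,r)\<in>G \<Longrightarrow> r \<le> norm x"
  using assms unfolding hb_good_def by blast+

lemma hb_extend:
  fixes M :: "('a::real_normed_vector \<times> real) set"
  assumes g: "hb_good M" and ne: "(0,0) \<in> M" and y: "\<forall>r. (y,r) \<notin> M"
  shows "\<exists>M'. hb_good M' \<and> M \<subseteq> M' \<and> M' \<noteq> M"
proof -
  have funM: "\<And>x r s. (x,r)\<in>M \<Longrightarrow> (x,s)\<in>M \<Longrightarrow> r = s"
   and add: "\<And>x r z s. (x,r)\<in>M \<Longrightarrow> (z,s)\<in>M \<Longrightarrow> (x+z, r+s)\<in>M"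
   and scl: "\<And>x r c. (x,r)\<in>M \<Longrightarrow> (c *\<^sub>R x, c*r)\<in>M"
   and dom: "\<And>x r. (x,r)\<in>M \<Longrightarrow> r \<le> norm x"
    using hb_goodD[OF g] by blast+
  define L where "L = {r - norm (x - y) | x r. (x,r)\<in>M}"
  define c where "c = Sup L"
  have key: "r - norm (x - y) \<le> norm (x' + y) - s" if "(x,r)\<in>M" "(x',s)\<in>M" for x r x' s
  proof -
    have "r + s \<le> norm (x + x')" using dom[OF add[OF that]] .
    also have "x + x' = (x - y) + (x' + y)" by simp
    also have "norm \<dots> \<le> norm (x - y) + norm (x' + y)" by (rule norm_triangle_ineq)
    finally show ?thesis by simp
  qed
  have Lne: "L \<noteq> {}" using ne unfolding L_def by blast
  have Lbdd: "bdd_above L" unfolding L_def bdd_above_def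
    using key[OF _ ne] by auto
  have c_lo: "r - norm (x - y) \<le> c" if "(x,r)\<in>M" for x r
    unfolding c_def by (rule cSup_upper[OF _ Lbdd]) (use that L_def in blast)
  have c_hi: "c \<le> norm (x' + y) - s" if "(x',s)\<in>M" for x' s
    unfolding c_def by (rule cSup_least[OF Lne]) (use key that L_def in blast)
  define M' where "M' = {(x + t *\<^sub>R y, r + t * c) | x r t. (x,r)\<in>M}"
  have inj: "t = t' \<and> x = x'" if "(x,r)\<in>M" "(x',r')\<in>M" "x + t *\<^sub>R y = x' + t' *\<^sub>R y" for x r x' r' t t'
  proof (cases "t = t'")
    case True then show ?thesis using that by simp
  next
    case False
    have "(x + (-1) *\<^sub>R x', r + (-1) * r') \<in> M" using add[OF that(1) scl[OF that(2)]] .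
    then have "((1/(t'-t)) *\<^sub>R (x + (-1) *\<^sub>R x'), (1/(t'-t)) * (r + (-1) * r')) \<in> M"
      using scl by blast
    then have "((1/(t'-t)) *\<^sub>R (x - x'), (1/(t'-t)) * (r - r')) \<in> M" by simp
    moreover have "(1/(t'-t)) *\<^sub>R (x - x') = y"
    proof -
      have "x - x' = (t' - t) *\<^sub>R y" using that(3) by (simp add: algebra_simps)
      then show ?thesis using False by simp
    qed
    ultimately show ?thesis using y by auto
  qed
  have "hb_good M'"
    unfolding hb_good_def
  proof (intro conjI allI impI)
    fix x r s assume "(x,r)\<in>M'" "(x,s)\<in>M'"
    then obtain x1 r1 t1 x2 r2 t2 where h: "x = x1 + t1 *\<^sub>R y" "r = r1 + t1*c" "(x1,r1)\<in>M"
      "x = x2 + t2 *\<^sub>R y" "s = r2 + t2*c" "(x2,r2)\<in>M" unfolding M'_def by blast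
    then have "t1 = t2 \<and> x1 = x2" using inj[of x1 r1 x2 r2 t1 t2] by simp
    then show "r = s" using h funM by metis
  next
    fix x r z s assume "(x,r)\<in>M'" "(z,s)\<in>M'"
    then obtain x1 r1 t1 x2 r2 t2 where h: "x = x1 + t1 *\<^sub>R y" "r = r1 + t1*c" "(x1,r1)\<in>M"
      "z = x2 + t2 *\<^sub>R y" "s = r2 + t2*c" "(x2,r2)\<in>M" unfolding M'_def by blast
    have "(x1 + x2 + (t1 + t2) *\<^sub>R y, r1 + r2 + (t1+t2)*c) \<in> M'"
      unfolding M'_def using add[OF h(3) h(6)] by blast
    then show "(x + z, r + s) \<in> M'" using h by (simp add: algebra_simps)
  next
    fix x r d assume "(x,r)\<in>M'"
    then obtain x1 r1 t1 where h: "x = x1 + t1 *\<^sub>R y" "r = r1 + t1*c" "(x1,r1)\<in>M"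
      unfolding M'_def by blast
    have "(d *\<^sub>R x1 + (d*t1) *\<^sub>R y, d*r1 + (d*t1)*c) \<in> M'"
      unfolding M'_def using scl[OF h(3)] by blast
    then show "(d *\<^sub>R x, d * r) \<in> M'" using h by (simp add: algebra_simps)
  next
    fix x r assume "(x,r)\<in>M'"
    then obtain x1 r1 t where h: "x = x1 + t *\<^sub>R y" "r = r1 + t*c" "(x1,r1)\<in>M"
      unfolding M'_def by blast
    show "r \<le> norm x"
    proof (cases "t > 0")
      case True
      have m: "((1/t) *\<^sub>R x1, (1/t)*r1) \<in> M" using scl[OF h(3)] .
      have "c \<le> norm ((1/t) *\<^sub>R x1 + y) - (1/t)*r1" using c_hi[OF m] .
      also have "(1/t) *\<^sub>R x1 + y = (1/t) *\<^sub>R (x1 + t *\<^sub>R y)" using True by (simp add: algebra_simps)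
      finally have "c \<le> (1/t) * norm (x1 + t *\<^sub>R y) - (1/t) * r1" using True by simp
      then have "t * c \<le> t * ((1/t) * norm (x1 + t *\<^sub>R y) - (1/t) * r1)"
        using True by (simp add: mult_left_mono)
      also have "\<dots> = norm (x1 + t *\<^sub>R y) - r1" using True by (simp add: algebra_simps)
      finally show ?thesis using h by simp
    next
      case False
      show ?thesis
      proof (cases "t = 0")
        case True then show ?thesis using h dom by simp
      next
        case False
        define s where "s = -t"
        have sp: "s > 0" using False \<open>\<not> t > 0\<close> s_def by simp
        have m: "((1/s) *\<^sub>R x1, (1/s)*r1) \<in> M" using scl[OF h(3)] .
        have "(1/s)*r1 - norm ((1/s) *\<^sub>R x1 - y) \<le> c" using c_lo[OF m] .
        also have "(1/s) *\<^sub>R x1 - y = (1/s) *\<^sub>R (x1 - s *\<^sub>R y)" using sp by (simp add: algebra_simps)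
        finally have "(1/s)*r1 - (1/s) * norm (x1 - s *\<^sub>R y) \<le> c" using sp by simp
        then have "s * ((1/s)*r1 - (1/s) * norm (x1 - s *\<^sub>R y)) \<le> s * c"
          using sp by (simp add: mult_left_mono)
        then have "r1 - norm (x1 - s *\<^sub>R y) \<le> s * c" using sp by (simp add: algebra_simps)
        then show ?thesis using h s_def by (simp add: algebra_simps)
      qed
    qed
  qed
  moreover have "M \<subseteq> M'"
  proof
    fix p assume "p \<in> M"
    then obtain x r where "p = (x,r)" "(x,r)\<in>M" by (cases p) auto
    moreover have "(x + 0 *\<^sub>R y, r + 0 * c) \<in> M'" unfolding M'_def using \<open>(x,r)\<in>M\<close> by blast
    ultimately show "p \<in> M'" by simp
  qed
  moreover have "(0 + 1 *\<^sub>R y, 0 + 1 * c) \<in> M'" unfolding M'_def using ne by blast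
  then have "(y, c) \<in> M'" by simp
  then have "M' \<noteq> M" using y by auto
  ultimately show ?thesis by blast
qed

lemma real_hahn_banach:
  fixes d :: "'a::real_normed_vector"
  assumes "d \<noteq> 0"
  shows "\<exists>\<phi>::'a \<Rightarrow> real. (\<forall>x y. \<phi> (x + y) = \<phi> x + \<phi> y) \<and> (\<forall>c x. \<phi> (c *\<^sub>R x) = c * \<phi> x) \<and>
           (\<forall>z. \<bar>\<phi> z\<bar> \<le> norm z) \<and> \<phi> d = norm d"
proof -
  define G0 where "G0 = {(t *\<^sub>R d, t * norm d) | t. True}"
  define A where "A = {G. hb_good G \<and> G0 \<subseteq> G}"
  have G0g: "hb_good G0"
    unfolding hb_good_def G0_def
  proof (intro conjI allI impI)
    fix x r s assume "(x, r) \<in> {(t *\<^sub>R d, t * norm d) |t. True}" "(x, s) \<in> {(t *\<^sub>R d, t * norm d) |t. True}"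
    then obtain t1 t2 where "x = t1 *\<^sub>R d" "r = t1 * norm d" "x = t2 *\<^sub>R d" "s = t2 * norm d" by blast
    then show "r = s" using assms by (metis scaleR_cancel_right)
  next
    fix x r y s assume "(x, r) \<in> {(t *\<^sub>R d, t * norm d) |t. True}" "(y, s) \<in> {(t *\<^sub>R d, t * norm d) |t. True}"
    then obtain t1 t2 where "x = t1 *\<^sub>R d" "r = t1 * norm d" "y = t2 *\<^sub>R d" "s = t2 * norm d" by blast
    then show "(x + y, r + s) \<in> {(t *\<^sub>R d, t * norm d) |t. True}"
      by (auto intro!: exI[of _ "t1+t2"] simp: algebra_simps)
  next
    fix x r c assume "(x, r) \<in> {(t *\<^sub>R d, t * norm d) |t. True}"
    then obtain t1 where "x = t1 *\<^sub>R d" "r = t1 * norm d" by blast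
    then show "(c *\<^sub>R x, c * r) \<in> {(t *\<^sub>R d, t * norm d) |t. True}"
      by (auto intro!: exI[of _ "c*t1"] simp: algebra_simps)
  next
    fix x r assume "(x, r) \<in> {(t *\<^sub>R d, t * norm d) |t. True}"
    then obtain t1 where "x = t1 *\<^sub>R d" "r = t1 * norm d" by blast
    then show "r \<le> norm x" by (simp add: mult_right_mono)
  qed
  have "\<forall>C\<in>chains A. \<exists>U\<in>A. \<forall>X\<in>C. X \<subseteq> U"
  proof
    fix C assume C: "C \<in> chains A"
    show "\<exists>U\<in>A. \<forall>X\<in>C. X \<subseteq> U"
    proof (cases "C = {}")
      case True then show ?thesis using G0g A_def by auto
    next
      case False
      have CA: "C \<subseteq> A" using C unfolding chains_def by blast
      have two: "\<exists>X\<in>C. p \<in> X \<and> q \<in> X" if pq: "p \<in> \<Union>C" "q \<in> \<Union>C" for p q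
      proof -
        obtain X1 X2 where "X1 \<in> C" "X2 \<in> C" "p \<in> X1" "q \<in> X2" using pq by blast
        then show ?thesis using chainsD[OF C, of X1 X2] by blast
      qed
      have "hb_good (\<Union>C)"
        unfolding hb_good_def
      proof (intro conjI allI impI)
        fix x r s assume "(x,r) \<in> \<Union>C" "(x,s) \<in> \<Union>C"
        then obtain X where "X \<in> C" "(x,r)\<in>X" "(x,s)\<in>X" using two by blast
        then show "r = s" using CA A_def hb_goodD(1) by blast
      next
        fix x r y s assume "(x,r) \<in> \<Union>C" "(y,s) \<in> \<Union>C"
        then obtain X where "X \<in> C" "(x,r)\<in>X" "(y,s)\<in>X" using two by blast
        then have "(x+y, r+s) \<in> X" using CA A_def hb_goodD(2) by blast
        then show "(x+y, r+s) \<in> \<Union>C" using \<open>X\<in>C\<close> by blast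
      next
        fix x r c assume "(x,r) \<in> \<Union>C"
        then obtain X where "X \<in> C" "(x,r)\<in>X" by blast
        then have "(c *\<^sub>R x, c*r) \<in> X" using CA A_def hb_goodD(3) by blast
        then show "(c *\<^sub>R x, c*r) \<in> \<Union>C" using \<open>X\<in>C\<close> by blast
      next
        fix x r assume "(x,r) \<in> \<Union>C"
        then obtain X where "X \<in> C" "(x,r)\<in>X" by blast
        then show "r \<le> norm x" using CA A_def hb_goodD(4) by blast
      qed
      moreover have "G0 \<subseteq> \<Union>C" using False CA A_def by blast
      ultimately show ?thesis using A_def by blast
    qed
  qed
  from Zorn_Lemma2[OF this] obtain M where M: "M \<in> A" and max: "\<forall>X\<in>A. M \<subseteq> X \<longrightarrow> X = M" by blast
  have Mg: "hb_good M" and G0M: "G0 \<subseteq> M" using M A_def by auto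
  have funM: "\<And>x r s. (x,r)\<in>M \<Longrightarrow> (x,s)\<in>M \<Longrightarrow> r = s"
   and add: "\<And>x r z s. (x,r)\<in>M \<Longrightarrow> (z,s)\<in>M \<Longrightarrow> (x+z, r+s)\<in>M"
   and scl: "\<And>x r c. (x,r)\<in>M \<Longrightarrow> (c *\<^sub>R x, c*r)\<in>M"
   and dom: "\<And>x r. (x,r)\<in>M \<Longrightarrow> r \<le> norm x"
    using hb_goodD[OF Mg] by blast+
  have dM: "(d, norm d) \<in> M" using G0M G0_def by (auto intro!: exI[of _ 1])
  have zM: "(0,0) \<in> M" using scl[OF dM, of 0] by simp
  have total: "\<exists>r. (y,r) \<in> M" for y
  proof (rule ccontr)
    assume "\<nexists>r. (y, r) \<in> M"
    then obtain M' where "hb_good M'" "M \<subseteq> M'" "M' \<noteq> M" using hb_extend[OF Mg zM] by blast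
    then show False using max G0M A_def by blast
  qed
  define \<phi> where "\<phi> y = (THE r. (y,r) \<in> M)" for y
  have phiM: "(y, \<phi> y) \<in> M" for y
    unfolding \<phi>_def using total[of y] funM by (metis theI)
  have phi_eq: "(y, r) \<in> M \<Longrightarrow> \<phi> y = r" for y r using phiM funM by blast
  show ?thesis
  proof (intro exI conjI allI)
    fix x y show "\<phi> (x + y) = \<phi> x + \<phi> y" using phi_eq[OF add[OF phiM phiM]] .
  next
    fix c x show "\<phi> (c *\<^sub>R x) = c * \<phi> x" using phi_eq[OF scl[OF phiM]] .
  next
    fix z
    have "\<phi> z \<le> norm z" using dom[OF phiM] .
    moreover have "\<phi> ((-1) *\<^sub>R z) = (-1) * \<phi> z" using phi_eq[OF scl[OF phiM]] .
    then have "- \<phi> z \<le> norm z" using dom[OF phiM, of "(-1) *\<^sub>R z"] by simp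
    ultimately show "\<bar>\<phi> z\<bar> \<le> norm z" by simp
  next
    show "\<phi> d = norm d" using phi_eq[OF dM] .
  qed
qed


section \<open>Complex structure\<close>

context
  fixes sm :: "complex \<Rightarrow> 'z::real_normed_vector \<Rightarrow> 'z"
  assumes cns: "complex_normed_space sm"
begin

lemma sm_real: "sm (complex_of_real r) z = r *\<^sub>R z"
  and sm_mult: "sm (a * b) z = sm a (sm b z)"
  and sm_add: "sm a (z + w) = sm a z + sm a w"
  and sm_addc: "sm (a + b) z = sm a z + sm b z"
  and sm_norm: "norm (sm a z) = cmod a * norm z"
  using cns unfolding complex_normed_space_def by blast+

lemma sm_zero: "sm 0 z = 0"
  using sm_real[of 0 z] by simp

lemma sm_one: "sm 1 z = z"
  using sm_real[of 1 z] by simp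

lemma sm_diffc: "sm (a - b) z = sm a z - sm b z"
  using sm_addc[of "a - b" b z] by (simp add: algebra_simps)

lemma sm_decomp: "sm c z = Re c *\<^sub>R z + Im c *\<^sub>R sm \<i> z"
proof -
  have "sm c z = sm (complex_of_real (Re c) + \<i> * complex_of_real (Im c)) z"
    using complex_eq[of c] by simp
  also have "\<dots> = Re c *\<^sub>R z + sm (complex_of_real (Im c) * \<i>) z"
    by (simp add: sm_addc sm_real mult.commute)
  also have "sm (complex_of_real (Im c) * \<i>) z = Im c *\<^sub>R sm \<i> z"
    by (simp add: sm_mult sm_real)
  finally show ?thesis .
qed

lemma complex_hb:
  assumes "d \<noteq> 0"
  shows "\<exists>x\<in>dual sm. x d \<noteq> 0"
proof -
  obtain \<phi> :: "'z \<Rightarrow> real" where padd: "\<And>x y. \<phi> (x + y) = \<phi> x + \<phi> y"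
    and pscl: "\<And>c x. \<phi> (c *\<^sub>R x) = c * \<phi> x" and pb: "\<And>z. \<bar>\<phi> z\<bar> \<le> norm z"
    and pd: "\<phi> d = norm d"
    using real_hahn_banach[OF assms] by blast
  have pdiff: "\<phi> (a - b) = \<phi> a - \<phi> b" for a b
    using padd[of "a - b" b] by simp
  define x where "x z = complex_of_real (\<phi> z) - \<i> * complex_of_real (\<phi> (sm \<i> z))" for z
  have "x \<in> dual sm"
    unfolding dual_def mem_Collect_eq
  proof (intro conjI allI exI)
    fix z w show "x (z + w) = x z + x w" unfolding x_def by (simp add: sm_add padd algebra_simps)
  next
    fix c z
    have e1: "\<phi> (sm c z) = Re c * \<phi> z + Im c * \<phi> (sm \<i> z)"
      unfolding sm_decomp[of c z] by (simp add: padd pscl)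
    have "sm \<i> (sm c z) = sm (\<i> * c) z" by (simp add: sm_mult)
    then have e2: "\<phi> (sm \<i> (sm c z)) = - Im c * \<phi> z + Re c * \<phi> (sm \<i> z)"
      unfolding sm_decomp[of "\<i> * c" z] by (simp add: padd pscl pdiff)
    show "x (sm c z) = c * x z" unfolding x_def e1 e2
      by (simp add: complex_eq_iff algebra_simps)
  next
    fix z
    have "cmod (x z) \<le> cmod (complex_of_real (\<phi> z)) + cmod (\<i> * complex_of_real (\<phi> (sm \<i> z)))"
      unfolding x_def by (rule norm_triangle_ineq4)
    also have "\<dots> = \<bar>\<phi> z\<bar> + \<bar>\<phi> (sm \<i> z)\<bar>" by (simp add: norm_mult)
    also have "\<dots> \<le> norm z + norm (sm \<i> z)" using pb by (simp add: add_mono)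
    also have "\<dots> = 2 * norm z" by (simp add: sm_norm)
    finally show "cmod (x z) \<le> 2 * norm z" .
  qed
  moreover have "Re (x d) = norm d" unfolding x_def by (simp add: pd)
  then have "x d \<noteq> 0" using assms by auto
  ultimately show ?thesis by blast
qed

lemma dual_add: "x \<in> dual sm \<Longrightarrow> x (z + w) = x z + x w"
  and dual_sm: "x \<in> dual sm \<Longrightarrow> x (sm c z) = c * x z"
  unfolding dual_def by blast+

lemma dual_scaleR: "x \<in> dual sm \<Longrightarrow> x (r *\<^sub>R z) = complex_of_real r * x z"
  using dual_sm[of x "complex_of_real r" z] by (simp add: sm_real)

lemma dual_bl: assumes "x \<in> dual sm" shows "bounded_linear x"
proof -
  obtain K where K: "\<And>z. cmod (x z) \<le> K * norm z" using assms unfolding dual_def by blast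
  show ?thesis
    by (rule bounded_linear_intro[of _ K])
       (auto simp: dual_add[OF assms] dual_scaleR[OF assms] scaleR_conv_of_real K mult.commute)
qed

lemma dual_zero: "x \<in> dual sm \<Longrightarrow> x 0 = 0"
  using dual_bl linear_0 bounded_linear.linear by blast

lemma dual_diff: "x \<in> dual sm \<Longrightarrow> x (z - w) = x z - x w"
  using dual_bl linear_diff bounded_linear.linear by blast

lemma dual_sum: "x \<in> dual sm \<Longrightarrow> x (sum g A) = (\<Sum>a\<in>A. x (g a))"
  using dual_bl real_vector.linear_sum bounded_linear.linear by blast

lemma dual_bound1: "x \<in> dual sm \<Longrightarrow> onorm x = 1 \<Longrightarrow> cmod (x z) \<le> norm z"
  using onorm[OF dual_bl, of x z] by simp

lemma dual_half: assumes "x \<in> dual sm" "x \<circ> S = x"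
  shows "x ((1/2) *\<^sub>R (z + S z)) = x z"
proof -
  have "x (S z) = x z" using assms(2) by (metis comp_apply)
  then show ?thesis by (simp add: dual_scaleR[OF assms(1)] dual_add[OF assms(1)])
qed

lemma cspan_diff:
  assumes "a \<in> cspan sm F" "b \<in> cspan sm F"
  shows "a - b \<in> cspan sm F"
proof -
  obtain A c where A: "finite A" "A \<subseteq> F" "a = (\<Sum>p\<in>A. sm (c p) p)" using assms(1) unfolding cspan_def by blast
  obtain B e where B: "finite B" "B \<subseteq> F" "b = (\<Sum>p\<in>B. sm (e p) p)" using assms(2) unfolding cspan_def by blast
  define C where "C = A \<union> B"
  have fC: "finite C" using A B C_def by simp
  have ext: "(\<Sum>p\<in>X. sm (g p) p) = (\<Sum>p\<in>C. sm (if p \<in> X then g p else 0) p)" if "X \<subseteq> C" for X g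
  proof -
    have "(\<Sum>p\<in>C. sm (if p \<in> X then g p else 0) p) = (\<Sum>p\<in>C. if p \<in> X then sm (g p) p else 0)"
      by (rule sum.cong) (auto simp: sm_zero)
    also have "\<dots> = (\<Sum>p\<in>C \<inter> X. sm (g p) p)" by (rule sum.inter_restrict[OF fC, symmetric])
    also have "C \<inter> X = X" using that by blast
    finally show ?thesis by simp
  qed
  define d where "d p = (if p \<in> A then c p else 0) - (if p \<in> B then e p else 0)" for p
  have "a - b = (\<Sum>p\<in>C. sm (if p \<in> A then c p else 0) p) - (\<Sum>p\<in>C. sm (if p \<in> B then e p else 0) p)"
    using ext[of A c] ext[of B e] A(3) B(3) C_def by simp
  also have "\<dots> = (\<Sum>p\<in>C. sm (if p \<in> A then c p else 0) p - sm (if p \<in> B then e p else 0) p)"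
    by (rule sum_subtractf[symmetric])
  also have "\<dots> = (\<Sum>p\<in>C. sm (d p) p)"
    unfolding d_def by (rule sum.cong) (simp_all only: sm_diffc)
  finally have "a - b = (\<Sum>p\<in>C. sm (d p) p)" .
  moreover have "C \<subseteq> F" using A B C_def by simp
  ultimately show ?thesis unfolding cspan_def mem_Collect_eq
    by (intro exI[of _ C] exI[of _ d]) (use fC in simp)
qed

lemma clsp_diff:
  assumes "a \<in> clsp sm F" "b \<in> clsp sm F"
  shows "a - b \<in> clsp sm F"
proof -
  obtain xa where xa: "\<And>n. xa n \<in> cspan sm F" "xa \<longlonglongrightarrow> a"
    using assms(1) unfolding clsp_def closure_sequential by blast
  obtain xb where xb: "\<And>n. xb n \<in> cspan sm F" "xb \<longlonglongrightarrow> b"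
    using assms(2) unfolding clsp_def closure_sequential by blast
  have "\<forall>n. xa n - xb n \<in> cspan sm F" using xa xb cspan_diff by blast
  moreover have "(\<lambda>n. xa n - xb n) \<longlonglongrightarrow> a - b" using xa xb by (intro tendsto_diff)
  ultimately show ?thesis unfolding clsp_def closure_sequential by (intro exI[of _ "\<lambda>n. xa n - xb n"]) simp
qed

lemma in_clsp: assumes "f \<in> F" shows "f \<in> clsp sm F"
proof -
  have "f = (\<Sum>p\<in>{f}. sm 1 p)" by (simp add: sm_one)
  then have "f \<in> cspan sm F" unfolding cspan_def mem_Collect_eq
    by (intro exI[of _ "{f}"] exI[of _ "\<lambda>_. 1"]) (use assms in simp)
  then show ?thesis unfolding clsp_def using closure_subset by blast
qed

lemma zero_perp: "0 \<in> perp F"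
  unfolding perp_def orth_def by simp

lemma sym_props:
  assumes "is_symmetry sm F S"
  shows "S (z + w) = S z + S w" and "S (S z) = z" and "norm (S z) = norm z"
    and "{z. S z = z} = {a + b | a b. a \<in> clsp sm F \<and> b \<in> perp F}"
    and "clsp sm F \<inter> perp F = {0}"
  using assms unfolding is_symmetry_def
  by ((elim conjE, assumption) | (elim conjE, simp))+

lemma sym_sm: "is_symmetry sm F S \<Longrightarrow> S (sm c z) = sm c (S z)"
  unfolding is_symmetry_def by simp

lemma sym_scaleR: "is_symmetry sm F S \<Longrightarrow> S (r *\<^sub>R z) = r *\<^sub>R S z"
  using sym_sm[of F S "complex_of_real r" z] by (simp add: sm_real)

lemma sym_clsp_fix: assumes "is_symmetry sm F S" "a \<in> clsp sm F" shows "S a = a"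
proof -
  have "a = a + 0" by simp
  then have "a \<in> {a + b | a b. a \<in> clsp sm F \<and> b \<in> perp F}" using assms(2) zero_perp by blast
  then show ?thesis using sym_props(4)[OF assms(1)] by blast
qed

lemma sym_inter: "is_symmetry sm F S \<Longrightarrow> a \<in> clsp sm F \<Longrightarrow> a \<in> perp F \<Longrightarrow> a = 0"
  using sym_props(5) by blast

lemma sym_half:
  assumes "is_symmetry sm F S"
  shows "\<exists>a b. (1/2) *\<^sub>R (z + S z) = a + b \<and> a \<in> clsp sm F \<and> b \<in> perp F"
proof -
  have "S ((1/2) *\<^sub>R (z + S z)) = (1/2) *\<^sub>R (z + S z)"
    by (simp add: sym_scaleR[OF assms] sym_props(1,2)[OF assms] add.commute)
  then show ?thesis using sym_props(4)[OF assms] by blast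
qed

lemma sym_half_norm:
  assumes "is_symmetry sm F S"
  shows "norm ((1/2) *\<^sub>R (z + S z)) \<le> norm z"
proof -
  have "norm ((1/2) *\<^sub>R (z + S z)) = (1/2) * norm (z + S z)" by simp
  also have "\<dots> \<le> (1/2) * (norm z + norm (S z))" by (simp add: norm_triangle_ineq)
  finally show ?thesis by (simp add: sym_props(3)[OF assms])
qed

section \<open>Geometric tripotents\<close>

lemma gt_sym_ok:
  assumes "geometric_tripotent sm u"
  shows "is_symmetry sm (face u) (gt_sym sm u)" and "u \<circ> gt_sym sm u = u"
proof -
  have "\<exists>S. is_symmetry sm (face u) S \<and> u \<circ> S = u" using assms unfolding geometric_tripotent_def by blast
  then have "is_symmetry sm (face u) (gt_sym sm u) \<and> u \<circ> gt_sym sm u = u"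
    unfolding gt_sym_def by (rule someI_ex)
  then show "is_symmetry sm (face u) (gt_sym sm u)" and "u \<circ> gt_sym sm u = u" by blast+
qed

lemma gt_basic:
  assumes "geometric_tripotent sm u"
  shows "u \<in> dual sm" and "onorm u = 1" and "\<And>g. g \<in> perp (face u) \<Longrightarrow> u g = 0"
    and "face u \<noteq> {}" and "norm_exposed_face sm (face u)"
proof -
  have pu: "projective_unit sm u" and sf: "symmetric_face sm (face u)"
    using assms unfolding geometric_tripotent_def by blast+
  show "u \<in> dual sm" and "onorm u = 1" and "\<And>g. g \<in> perp (face u) \<Longrightarrow> u g = 0"
    using pu unfolding projective_unit_def by blast+
  show ne: "norm_exposed_face sm (face u)" using sf unfolding symmetric_face_def by blast
  then show "face u \<noteq> {}" unfolding norm_exposed_face_def by blast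
qed

lemma gt_face_norm:
  assumes "geometric_tripotent sm u" "f \<in> face u"
  shows "norm f = 1"
proof -
  have "norm f \<le> 1" "u f = 1" using assms(2) unfolding face_def by auto
  moreover have "cmod (u f) \<le> norm f" using dual_bound1 gt_basic(1,2)[OF assms(1)] by blast
  ultimately show ?thesis by simp
qed

lemma P2_clsp:
  assumes "geometric_tripotent sm u" "a \<in> clsp sm (face u)"
  shows "P2 sm u a = a"
proof -
  note S = gt_sym_ok(1)[OF assms(1)]
  have fix1: "gt_sym sm u a = a" using sym_clsp_fix[OF S assms(2)] .
  have "a + a = 2 *\<^sub>R a" by (simp add: scaleR_2)
  then have h: "(1/2) *\<^sub>R (a + gt_sym sm u a) = a" using fix1 by simp
  show ?thesis unfolding P2_def h
  proof (rule the_equality)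
    show "a \<in> clsp sm (face u) \<and> a - a \<in> perp (face u)" using assms(2) zero_perp by simp
  next
    fix a' assume "a' \<in> clsp sm (face u) \<and> a - a' \<in> perp (face u)"
    moreover then have "a - a' \<in> clsp sm (face u)" using clsp_diff assms(2) by blast
    ultimately have "a - a' = 0" using sym_inter[OF S] by blast
    then show "a' = a" by simp
  qed
qed

lemma P0_clsp:
  assumes "geometric_tripotent sm u" "a \<in> clsp sm (face u)"
  shows "P0 sm u a = 0"
proof -
  have fix1: "gt_sym sm u a = a" using sym_clsp_fix[OF gt_sym_ok(1)[OF assms(1)] assms(2)] .
  have "a + a = 2 *\<^sub>R a" by (simp add: scaleR_2)
  then show ?thesis unfolding P0_def using fix1 P2_clsp[OF assms] by simp
qed

lemma P0_S:
  assumes "geometric_tripotent sm u"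
  shows "P0 sm u (gt_sym sm u z) = P0 sm u z"
proof -
  note S = gt_sym_ok(1)[OF assms]
  have e: "(1/2) *\<^sub>R (gt_sym sm u z + gt_sym sm u (gt_sym sm u z)) = (1/2) *\<^sub>R (z + gt_sym sm u z)"
    by (simp add: sym_props(2)[OF S] add.commute)
  have "P2 sm u (gt_sym sm u z) = P2 sm u z" unfolding P2_def e ..
  then show ?thesis unfolding P0_def e by simp
qed

lemma orth_inv:
  assumes "geometric_tripotent sm u" "gt_orth sm u' u"
  shows "u' \<circ> gt_sym sm u = u'"
proof -
  obtain x where "u' = x \<circ> P0 sm u" using assms(2) unfolding gt_orth_def U0_def by blast
  then show ?thesis using P0_S[OF assms(1)] by (auto simp: fun_eq_iff)
qed

lemma orth_clsp:
  assumes "geometric_tripotent sm u" "gt_orth sm u' u" "a \<in> clsp sm (face u)"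
  shows "u' a = 0"
proof -
  obtain x where x: "x \<in> dual sm" "u' = x \<circ> P0 sm u" using assms(2) unfolding gt_orth_def U0_def by blast
  then show ?thesis using P0_clsp[OF assms(1,3)] dual_zero[OF x(1)] by simp
qed

lemma min_face:
  assumes gt: "geometric_tripotent sm u" and mn: "gt_minimal sm u"
    and f: "f \<in> face u" and a: "a \<in> clsp sm (face u)"
  shows "a = sm (u a) f"
proof -
  obtain w where U2: "U2 sm u = {(\<lambda>z. c * w z) | c. True}" using mn unfolding gt_minimal_def by blast
  have fc: "f \<in> clsp sm (face u)" using in_clsp[OF f] .
  have coef: "\<exists>c. x a = c * w a \<and> x f = c * w f" if x: "x \<in> dual sm" for x
  proof -
    have "x \<circ> P2 sm u \<in> U2 sm u" unfolding U2_def using x by blast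
    then obtain c where "x \<circ> P2 sm u = (\<lambda>z. c * w z)" using U2 by blast
    then have "\<And>z. x (P2 sm u z) = c * w z" by (metis comp_apply)
    then show ?thesis using P2_clsp[OF gt a] P2_clsp[OF gt fc] by metis
  qed
  have uf: "u f = 1" using f unfolding face_def by simp
  obtain cu where "u a = cu * w a" "u f = cu * w f" using coef[OF gt_basic(1)[OF gt]] by blast
  then have wf: "w f \<noteq> 0" using uf by auto
  define \<mu> where "\<mu> = w a / w f"
  have "a - sm \<mu> f = 0"
  proof (rule ccontr)
    assume "a - sm \<mu> f \<noteq> 0"
    then obtain x where x: "x \<in> dual sm" "x (a - sm \<mu> f) \<noteq> 0" using complex_hb by blast
    obtain c where c: "x a = c * w a" "x f = c * w f" using coef[OF x(1)] by blast
    have "x (a - sm \<mu> f) = c * w a - \<mu> * (c * w f)"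
      using c by (simp add: dual_diff[OF x(1)] dual_sm[OF x(1)])
    also have "\<dots> = 0" unfolding \<mu>_def using wf by simp
    finally show False using x(2) by simp
  qed
  then have aeq: "a = sm \<mu> f" by simp
  then have "u a = \<mu>" using dual_sm[OF gt_basic(1)[OF gt]] uf by simp
  then show ?thesis using aeq by simp
qed

end

lemma orth_norm:
  fixes f b :: "'a::real_normed_vector"
  assumes "orth f b" "0 \<le> t"
  shows "t * norm f + norm b \<le> norm (t *\<^sub>R f + b)"
proof -
  have fb: "norm (f + b) = norm f + norm b" using assms(1) unfolding orth_def by simp
  show ?thesis
  proof (cases "t \<ge> 1")
    case True
    have "t *\<^sub>R (f + b) = (t *\<^sub>R f + b) + (t - 1) *\<^sub>R b" by (simp add: algebra_simps)
    then have "norm (t *\<^sub>R (f + b)) \<le> norm (t *\<^sub>R f + b) + norm ((t - 1) *\<^sub>R b)"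
      by (metis norm_triangle_ineq)
    then have "t * (norm f + norm b) \<le> norm (t *\<^sub>R f + b) + (t - 1) * norm b"
      using True assms(2) fb by simp
    then show ?thesis by (simp add: algebra_simps)
  next
    case False
    have "f + b = (t *\<^sub>R f + b) + (1 - t) *\<^sub>R f" by (simp add: algebra_simps)
    then have "norm (f + b) \<le> norm (t *\<^sub>R f + b) + norm ((1 - t) *\<^sub>R f)"
      by (metis norm_triangle_ineq)
    then have "norm f + norm b \<le> norm (t *\<^sub>R f + b) + (1 - t) * norm f"
      using False fb by simp
    then show ?thesis by (simp add: algebra_simps)
  qed
qed

lemma phase: "\<exists>\<mu>. cmod \<mu> = 1 \<and> \<mu> * x = complex_of_real (cmod x)"
proof (cases "x = 0")
  case True then show ?thesis by (intro exI[of _ 1]) simp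
next
  case False
  have "cnj x * x = complex_of_real (cmod x) ^ 2" using complex_norm_square[of x] by (simp add: mult.commute)
  then have "(cnj x / complex_of_real (cmod x)) * x = complex_of_real (cmod x)"
    using False by (simp add: power2_eq_square)
  moreover have "cmod (cnj x / complex_of_real (cmod x)) = 1" using False by (simp add: norm_divide)
  ultimately show ?thesis by blast
qed


lemma ind_bound:
  fixes sm :: "complex \<Rightarrow> 'z::real_normed_vector \<Rightarrow> 'z"
    and vs :: "nat \<Rightarrow> 'z \<Rightarrow> complex"
  assumes cns: "complex_normed_space sm"
    and gt: "\<And>i. geometric_tripotent sm (vs i)"
    and mn: "\<And>i. gt_minimal sm (vs i)"
    and orth: "\<And>i j. i \<noteq> j \<Longrightarrow> gt_orth sm (vs i) (vs j)"
    and fin: "finite A"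
  shows "(\<forall>k\<in>A. cmod (c k) \<le> 1) \<Longrightarrow> cmod (\<Sum>k\<in>A. c k * vs k z) \<le> norm z"
  using fin
proof (induction A arbitrary: z rule: finite_induct)
  case empty then show ?case by simp
next
  case (insert j A)
  note S = gt_sym_ok(1)[OF cns gt[of j]]
  obtain f where f: "f \<in> face (vs j)" using gt_basic(4)[OF cns gt[of j]] by blast
  have fn: "norm f = 1" using gt_face_norm[OF cns gt[of j] f] .
  obtain \<mu> where mu: "cmod \<mu> = 1" "\<mu> * vs j z = complex_of_real (cmod (vs j z))" using phase by blast
  define z' where "z' = sm \<mu> z"
  have nz': "norm z' = norm z" using sm_norm[OF cns] mu z'_def by simp
  have dj: "\<And>k. vs k \<in> dual sm" using gt_basic(1)[OF cns gt] .
  have vz': "\<And>k. vs k z' = \<mu> * vs k z" using dual_sm[OF cns dj] z'_def by simp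
  obtain a b where ab: "(1/2) *\<^sub>R (z' + gt_sym sm (vs j) z') = a + b" "a \<in> clsp sm (face (vs j))"
      "b \<in> perp (face (vs j))"
    using sym_half[OF cns S] by blast
  have inv: "vs k \<circ> gt_sym sm (vs j) = vs k" if "k \<in> insert j A" for k
  proof (cases "k = j")
    case True then show ?thesis using gt_sym_ok(2)[OF cns gt[of j]] by simp
  next
    case False then show ?thesis using orth_inv[OF cns gt[of j] orth[OF False]] by simp
  qed
  have split: "vs k z' = vs k a + vs k b" if "k \<in> insert j A" for k
    using dual_half[OF cns dj inv[OF that], of z'] ab(1) dual_add[OF cns dj] by simp
  have a0: "vs k a = 0" if "k \<in> A" for k
  proof -
    have "k \<noteq> j" using that insert.hyps by blast
    then show ?thesis using orth_clsp[OF cns gt[of j] orth[of k j] ab(2)] by simp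
  qed
  have b0: "vs j b = 0" using gt_basic(3)[OF cns gt[of j] ab(3)] .
  have vja: "vs j a = complex_of_real (cmod (vs j z))" using split[of j] b0 vz'[of j] mu(2) by simp
  have aeq: "a = cmod (vs j z) *\<^sub>R f"
    using min_face[OF cns gt[of j] mn[of j] f ab(2)] vja sm_real[OF cns] by simp
  have orthfb: "orth f b" using ab(3) f unfolding perp_def by blast
  have n1: "cmod (vs j z) + norm b \<le> norm (a + b)"
    using orth_norm[OF orthfb, of "cmod (vs j z)"] aeq fn by simp
  have n2: "norm (a + b) \<le> norm z" using sym_half_norm[OF cns S, of z'] ab(1) nz' by simp
  have IH: "cmod (\<Sum>k\<in>A. c k * vs k b) \<le> norm b" using insert.IH insert.prems by blast
  have sum': "(\<Sum>k\<in>insert j A. c k * vs k z') = c j * complex_of_real (cmod (vs j z)) + (\<Sum>k\<in>A. c k * vs k b)"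
  proof -
    have "(\<Sum>k\<in>insert j A. c k * vs k z') = c j * vs j z' + (\<Sum>k\<in>A. c k * vs k z')"
      using insert.hyps by simp
    also have "vs j z' = complex_of_real (cmod (vs j z))" using vz' mu by simp
    also have "(\<Sum>k\<in>A. c k * vs k z') = (\<Sum>k\<in>A. c k * vs k b)"
      by (rule sum.cong) (simp_all add: split a0)
    finally show ?thesis .
  qed
  have "(\<Sum>k\<in>insert j A. c k * vs k z') = \<mu> * (\<Sum>k\<in>insert j A. c k * vs k z)"
    by (simp add: vz' sum_distrib_left algebra_simps)
  then have "cmod (\<Sum>k\<in>insert j A. c k * vs k z) = cmod (\<Sum>k\<in>insert j A. c k * vs k z')"
    using mu by (simp add: norm_mult)
  also have "\<dots> \<le> cmod (c j * complex_of_real (cmod (vs j z))) + cmod (\<Sum>k\<in>A. c k * vs k b)"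
    unfolding sum' by (rule norm_triangle_ineq)
  also have "cmod (c j * complex_of_real (cmod (vs j z))) \<le> cmod (vs j z)"
  proof -
    have "cmod (c j) \<le> 1" using insert.prems by simp
    then have "cmod (c j) * cmod (vs j z) \<le> 1 * cmod (vs j z)" by (rule mult_right_mono) simp
    then show ?thesis by (simp add: norm_mult)
  qed
  finally show ?case using IH n1 n2 by simp
qed


theorem lemma2p1:
  fixes sm :: "complex \<Rightarrow> 'z::real_normed_vector \<Rightarrow> 'z"
    and vs :: "nat \<Rightarrow> 'z \<Rightarrow> complex"
    and v :: "'z \<Rightarrow> complex"
  assumes "complex_normed_space sm"
    and "SFS sm"
    and "\<And>i. geometric_tripotent sm (vs i)"
    and "\<And>i. gt_minimal sm (vs i)"
    and "\<And>i j. i \<noteq> j \<Longrightarrow> gt_orth sm (vs i) (vs j)"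
    and "geometric_tripotent sm v"
    and "\<And>i. gt_le (vs i) v"
    and "\<And>w. geometric_tripotent sm w \<Longrightarrow> (\<forall>i. gt_le (vs i) w) \<Longrightarrow> gt_le v w"
  shows "\<forall>z. (\<lambda>i. vs i z) sums v z"
proof -
  note cns = assms(1)
  note gt = assms(3)
  have dj: "\<And>k. vs k \<in> dual sm" using gt_basic(1)[OF cns gt] .
  have absb: "(\<Sum>k<n. cmod (vs k z)) \<le> norm z" for z n
  proof -
    define c where "c k = (SOME \<mu>. cmod \<mu> = 1 \<and> \<mu> * vs k z = complex_of_real (cmod (vs k z)))" for k
    have ck: "cmod (c k) = 1 \<and> c k * vs k z = complex_of_real (cmod (vs k z))" for k
      unfolding c_def by (rule someI_ex[OF phase])
    have "complex_of_real (\<Sum>k<n. cmod (vs k z)) = (\<Sum>k<n. c k * vs k z)"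
      using ck by (simp add: of_real_sum)
    moreover have "(\<Sum>k<n. cmod (vs k z)) = cmod (complex_of_real (\<Sum>k<n. cmod (vs k z)))"
      unfolding norm_of_real by (rule abs_of_nonneg[symmetric]) (simp add: sum_nonneg)
    ultimately have "(\<Sum>k<n. cmod (vs k z)) = cmod (\<Sum>k<n. c k * vs k z)" by simp
    also have "\<dots> \<le> norm z"
      by (rule ind_bound[OF cns gt assms(4) assms(5)]) (use ck in auto)
    finally show ?thesis .
  qed
  have sa: "summable (\<lambda>k. cmod (vs k z))" for z
    by (rule summableI_nonneg_bounded[of _ "norm z"]) (use absb in auto)
  have sc: "summable (\<lambda>k. vs k z)" for z using summable_norm_cancel[OF sa] .
  define w where "w z = (\<Sum>k. vs k z)" for z
  have wsums: "(\<lambda>k. vs k z) sums w z" for z unfolding w_def using summable_sums[OF sc] .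
  have wb: "cmod (w z) \<le> norm z" for z
  proof -
    have "cmod (w z) \<le> (\<Sum>k. cmod (vs k z))" unfolding w_def by (rule summable_norm[OF sa])
    also have "\<dots> \<le> norm z" by (rule suminf_le_const[OF sa absb])
    finally show ?thesis .
  qed
  have wadd: "w (z + z') = w z + w z'" for z z'
  proof -
    have "w (z + z') = (\<Sum>k. vs k z + vs k z')" unfolding w_def by (simp add: dual_add[OF cns dj])
    also have "\<dots> = w z + w z'" unfolding w_def by (rule suminf_add[OF sc sc, symmetric])
    finally show ?thesis .
  qed
  have wsm: "w (sm c z) = c * w z" for c z
  proof -
    have "w (sm c z) = (\<Sum>k. c * vs k z)" unfolding w_def by (simp add: dual_sm[OF cns dj])
    also have "\<dots> = c * w z" unfolding w_def by (rule suminf_mult[OF sc])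
    finally show ?thesis .
  qed
  have wdual: "w \<in> dual sm"
    unfolding dual_def mem_Collect_eq
    by (intro conjI allI exI[of _ 1]) (simp_all add: wadd wsm wb)
  have vsf: "vs k f = (if k = i then 1 else 0)" if f: "f \<in> face (vs i)" for f i k
  proof (cases "k = i")
    case True then show ?thesis using f unfolding face_def by simp
  next
    case False then show ?thesis using orth_clsp[OF cns gt[of i] assms(5)[OF False] in_clsp[OF cns f]] by simp
  qed
  have wf: "w f = 1" if f: "f \<in> face (vs i)" for f i
  proof -
    have "(\<lambda>k. vs k f) = (\<lambda>k. if k = i then (\<lambda>_. 1::complex) k else 0)" using vsf[OF f] by auto
    then have "(\<lambda>k. vs k f) sums 1" using sums_single[of i "\<lambda>_. 1::complex"] by simp
    then show ?thesis using wsums sums_unique2 by blast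
  qed
  obtain f0 where f0: "f0 \<in> face (vs 0)" using gt_basic(4)[OF cns gt[of 0]] by blast
  have facew: "face (vs i) \<subseteq> face w" for i using wf unfolding face_def by auto
  have won: "onorm w = 1"
  proof (rule antisym)
    show "onorm w \<le> 1" by (rule onorm_bound) (simp_all add: wb)
  next
    have "norm (w f0) / norm f0 \<le> onorm w" by (rule le_onorm[OF dual_bl[OF cns wdual]])
    then show "1 \<le> onorm w" using wf[OF f0] gt_face_norm[OF cns gt[of 0] f0] by simp
  qed
  have perp_anti: "perp B \<subseteq> perp A" if "A \<subseteq> B" for A B :: "'z set"
    using that unfolding perp_def by blast
  have wzero: "w g = 0" if g: "\<And>i. g \<in> perp (face (vs i))" for g
  proof -
    have "\<And>k. vs k g = 0" using gt_basic(3)[OF cns gt g] .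
    then show ?thesis unfolding w_def by simp
  qed
  have wperp: "w g = 0" if "g \<in> perp (face w)" for g
    using wzero perp_anti[OF facew] that by blast
  have fwne: "face w \<noteq> {}" using f0 facew[of 0] by blast
  have nef: "norm_exposed_face sm (face w)"
    unfolding norm_exposed_face_def by (rule bexI[OF _ wdual]) (simp add: won fwne)
  have wfs: "WFS sm" using assms(2) unfolding SFS_def by (elim conjE)
  have sfs0: "\<forall>F S y. norm_exposed_face sm F \<and> is_symmetry sm F S \<and> y \<in> dual sm \<and> onorm y = 1 \<and>
              F \<subseteq> face y \<longrightarrow> y \<circ> S = y"
    using assms(2) unfolding SFS_def by (elim conjE)
  have sfs: "\<And>F S y. norm_exposed_face sm F \<Longrightarrow> is_symmetry sm F S \<Longrightarrow> y \<in> dual sm \<Longrightarrow> onorm y = 1 \<Longrightarrow>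
              F \<subseteq> face y \<Longrightarrow> y \<circ> S = y"
    using sfs0 by simp
  have symw: "symmetric_face sm (face w)" using wfs nef unfolding WFS_def by simp
  then obtain Sw where Sw: "is_symmetry sm (face w) Sw" unfolding symmetric_face_def by blast
  have "w \<circ> Sw = w" using sfs[OF nef Sw wdual won] by simp
  moreover have "projective_unit sm w" unfolding projective_unit_def using wdual won wperp by simp
  ultimately have gtw: "geometric_tripotent sm w"
    unfolding geometric_tripotent_def using symw Sw by blast
  have fvw: "face v \<subseteq> face w"
    using assms(8)[OF gtw] facew unfolding gt_le_def by blast
  note Sv = gt_sym_ok(1)[OF cns assms(6)]
  note vS = gt_sym_ok(2)[OF cns assms(6)]
  have vdual: "v \<in> dual sm" using gt_basic(1)[OF cns assms(6)] .
  have wS: "w \<circ> gt_sym sm v = w" using sfs[OF gt_basic(5)[OF cns assms(6)] Sv wdual won fvw] .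
  have wv_cl: "clsp sm (face v) \<subseteq> {x. w x = v x}"
    unfolding clsp_def
  proof (rule closure_minimal)
    show "closed {x. w x = v x}"
      by (rule closed_Collect_eq)
         (simp_all add: linear_continuous_on dual_bl[OF cns wdual] dual_bl[OF cns vdual])
  next
    show "cspan sm (face v) \<subseteq> {x. w x = v x}"
    proof
      fix p assume "p \<in> cspan sm (face v)"
      then obtain A c where A: "A \<subseteq> face v" "p = (\<Sum>q\<in>A. sm (c q) q)" unfolding cspan_def by blast
      have "w p = (\<Sum>q\<in>A. c q * w q)" using A(2) by (simp add: dual_sum[OF cns wdual] dual_sm[OF cns wdual])
      also have "\<dots> = (\<Sum>q\<in>A. c q * v q)"
      proof (rule sum.cong)
        fix q assume "q \<in> A"
        then have "q \<in> face v" "q \<in> face w" using A fvw by blast+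
        then show "c q * w q = c q * v q" unfolding face_def by simp
      qed simp
      also have "\<dots> = v p" using A(2) by (simp add: dual_sum[OF cns vdual] dual_sm[OF cns vdual])
      finally show "p \<in> {x. w x = v x}" by simp
    qed
  qed
  show ?thesis
  proof
    fix z
    obtain a b where ab: "(1/2) *\<^sub>R (z + gt_sym sm v z) = a + b" "a \<in> clsp sm (face v)" "b \<in> perp (face v)"
      using sym_half[OF cns Sv] by blast
    have "v z = v a + v b" using dual_half[OF cns vdual vS, of z] ab(1) dual_add[OF cns vdual] by simp
    also have "v b = 0" using gt_basic(3)[OF cns assms(6) ab(3)] .
    finally have vz: "v z = v a" by simp
    have "w z = w a + w b" using dual_half[OF cns wdual wS, of z] ab(1) dual_add[OF cns wdual] by simp
    moreover have "w b = 0"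
    proof (rule wzero)
      fix i have "face (vs i) \<subseteq> face v" using assms(7) unfolding gt_le_def by blast
      then show "b \<in> perp (face (vs i))" using perp_anti ab(3) by blast
    qed
    moreover have "w a = v a" using wv_cl ab(2) by blast
    ultimately have "w z = v z" using vz by simp
    then show "(\<lambda>i. vs i z) sums v z" using wsums[of z] by simp
  qed
qed

end
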